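(* Consider the nonatomic game with tolls, with cost densities $\bar c_{lj}(\mathbf{m})=g_{lj}c(m_j)+\gamma_l\sum_{i=1}^L m_{ij}g_{ij}c'(m_j)$, and suppose $h_{lj}=h_j$ for all $l\in\mathcal{L}$, $j\in\mathcal{N}$. Then every Nash equilibrium of this game is system optimal, i.e., minimizes $C(\mathbf{m})=\sum_{j\in\mathcal{N}}\sum_{l=1}^L m_{lj}g_{lj}c(m_j)$ over all congestion profiles.
   Context: Nonatomic model: classes $\mathcal{L}=\{1,\dots,L\}$ of nonatomic mobiles, class $l$ having total mass $M_l>0$, target SINR density $\gamma_l>0$ and power gain $h_{lj}>0$ to BS $j\in\mathcal{N}=\{1,\dots,N\}$; noise power $\sigma^2>0$. A congestion profile is $\mathbf{m}=(m_{lj})$ with $m_{lj}\ge0$, $\sum_j m_{lj}=M_l$. Set $m_j=\sum_l\gamma_l m_{lj}$, $g_{lj}=\gamma_l\sigma^2/h_{lj}$, $c(z)=1/(1-z)$ for $z<1$ and $c(z)=\infty$ for $z\ge1$, $c'(z)=1/(1-z)^2$ for $z<1$ and $c'(z)=\infty$ for $z\ge1$. $\mathbf{m}$ is a Nash equilibrium if for all $l,j$, $m_{lj}>0$ implies $\bar c_{lj}(\mathbf{m})\le \bar c_{lk}(\mathbf{m})$ for all $k$. Standing feasibility assumption: $\sum_l\gamma_l M_l<N$. *)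

theory Defs
  imports Complex_Main "HOL-Library.Extended_Real"
begin

text \<open>Classes are indexed by {1..L}, base stations by {1..N}.
  A profile is m :: nat \<Rightarrow> nat \<Rightarrow> real, m l j = mass of class l at BS j.\<close>

definition cfun :: "real \<Rightarrow> ereal" where
  "cfun z = (if z < 1 then ereal (1 / (1 - z)) else \<infinity>)"

definition dcfun :: "real \<Rightarrow> ereal" where
  "dcfun z = (if z < 1 then ereal (1 / (1 - z)^2) else \<infinity>)"

definition gcoef :: "(nat \<Rightarrow> real) \<Rightarrow> real \<Rightarrow> (nat \<Rightarrow> nat \<Rightarrow> real) \<Rightarrow> nat \<Rightarrow> nat \<Rightarrow> real" where
  "gcoef \<gamma> \<sigma>2 h l j = \<gamma> l * \<sigma>2 / h l j"

definition load :: "nat \<Rightarrow> (nat \<Rightarrow> real) \<Rightarrow> (nat \<Rightarrow> nat \<Rightarrow> real) \<Rightarrow> nat \<Rightarrow> real" where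
  "load L \<gamma> m j = (\<Sum>l\<in>{1..L}. \<gamma> l * m l j)"

definition congestion_profile ::
  "nat \<Rightarrow> nat \<Rightarrow> (nat \<Rightarrow> real) \<Rightarrow> (nat \<Rightarrow> nat \<Rightarrow> real) \<Rightarrow> bool" where
  "congestion_profile L N M m \<longleftrightarrow>
     (\<forall>l\<in>{1..L}. \<forall>j\<in>{1..N}. m l j \<ge> 0) \<and>
     (\<forall>l\<in>{1..L}. (\<Sum>j\<in>{1..N}. m l j) = M l)"

definition toll_density ::
  "nat \<Rightarrow> (nat \<Rightarrow> real) \<Rightarrow> real \<Rightarrow> (nat \<Rightarrow> nat \<Rightarrow> real) \<Rightarrow> (nat \<Rightarrow> nat \<Rightarrow> real)
     \<Rightarrow> nat \<Rightarrow> nat \<Rightarrow> ereal" where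
  "toll_density L \<gamma> \<sigma>2 h m l j =
     ereal (gcoef \<gamma> \<sigma>2 h l j) * cfun (load L \<gamma> m j)
     + ereal (\<gamma> l) * (\<Sum>i\<in>{1..L}. ereal (m i j * gcoef \<gamma> \<sigma>2 h i j) * dcfun (load L \<gamma> m j))"

text \<open>Total cost C(m) = sum_j sum_l m_lj g_lj c(m_j)  (with 0 * \<infinity> = 0).\<close>
definition total_cost ::
  "nat \<Rightarrow> nat \<Rightarrow> (nat \<Rightarrow> real) \<Rightarrow> real \<Rightarrow> (nat \<Rightarrow> nat \<Rightarrow> real) \<Rightarrow> (nat \<Rightarrow> nat \<Rightarrow> real) \<Rightarrow> ereal" where
  "total_cost L N \<gamma> \<sigma>2 h m =
     (\<Sum>j\<in>{1..N}. \<Sum>l\<in>{1..L}. ereal (m l j * gcoef \<gamma> \<sigma>2 h l j) * cfun (load L \<gamma> m j))"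

definition toll_nash_eq ::
  "nat \<Rightarrow> nat \<Rightarrow> (nat \<Rightarrow> real) \<Rightarrow> (nat \<Rightarrow> real) \<Rightarrow> real \<Rightarrow> (nat \<Rightarrow> nat \<Rightarrow> real)
     \<Rightarrow> (nat \<Rightarrow> nat \<Rightarrow> real) \<Rightarrow> bool" where
  "toll_nash_eq L N M \<gamma> \<sigma>2 h m \<longleftrightarrow>
     congestion_profile L N M m \<and>
     (\<forall>l\<in>{1..L}. \<forall>j\<in>{1..N}. m l j > 0 \<longrightarrow>
        (\<forall>k\<in>{1..N}. toll_density L \<gamma> \<sigma>2 h m l j \<le> toll_density L \<gamma> \<sigma>2 h m l k))"

end

theory Submission
  imports Defs
begin

lemma cvx:
  fixes x y :: real
  assumes "x < 1" "y < 1"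
  shows "x/(1-x) + (y-x)/(1-x)^2 \<le> y/(1-y)"
proof -
  define u where "u = 1 - x"
  define v where "v = 1 - y"
  have u: "u > 0" and v: "v > 0" using assms by (auto simp: u_def v_def)
  have x: "x = 1 - u" and y: "y = 1 - v" by (auto simp: u_def v_def)
  have "(1-u)/u + (u - v)/u^2 \<le> (1-v)/v"
  proof -
    have "(1-u)/u + (u - v)/u^2 = ((1-u)*u + (u-v)) / u^2"
      using u by (simp add: field_simps power2_eq_square)
    also have "\<dots> \<le> (1-v)/v"
    proof -
      have eq: "((1-u)*u + (u-v)) * v = (1-v)*u^2 - (u-v)^2" by (simp add: algebra_simps power2_eq_square)
      have "(u-v)^2 \<ge> 0" by simp
      hence "((1-u)*u + (u-v)) * v \<le> (1-v) * u^2" using eq by linarith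
      moreover have "u^2 > 0" using u by simp
      ultimately show ?thesis using v by (simp add: divide_le_eq le_divide_eq mult.commute)
    qed
    finally show ?thesis .
  qed
  thus ?thesis using x y by simp
qed

lemma ld_nonneg:
  assumes "congestion_profile L N M m" "\<forall>l\<in>{1..L}. \<gamma> l > 0" "j \<in> {1..N}"
  shows "load L \<gamma> m j \<ge> 0"
  using assms unfolding load_def congestion_profile_def
  by (auto intro!: sum_nonneg)

lemma ld_sum:
  assumes "congestion_profile L N M m"
  shows "(\<Sum>j\<in>{1..N}. load L \<gamma> m j) = (\<Sum>l\<in>{1..L}. \<gamma> l * M l)"
proof -
  have "(\<Sum>j\<in>{1..N}. load L \<gamma> m j) = (\<Sum>l\<in>{1..L}. \<Sum>j\<in>{1..N}. \<gamma> l * m l j)"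
    unfolding load_def by (rule sum.swap)
  also have "\<dots> = (\<Sum>l\<in>{1..L}. \<gamma> l * M l)"
    using assms unfolding congestion_profile_def by (simp add: sum_distrib_left[symmetric])
  finally show ?thesis .
qed

lemma cfun_nonneg: "cfun z \<ge> 0"
  unfolding cfun_def by auto

lemma dcfun_nonneg: "dcfun z \<ge> 0"
  unfolding dcfun_def by auto

lemma tc_real:
  assumes "\<forall>j\<in>{1..N}. load L \<gamma> m j < 1"
  shows "total_cost L N \<gamma> \<sigma>2 h m = ereal (\<Sum>j\<in>{1..N}. \<Sum>l\<in>{1..L}.
            m l j * gcoef \<gamma> \<sigma>2 h l j * (1/(1 - load L \<gamma> m j)))"
proof -
  have "total_cost L N \<gamma> \<sigma>2 h m = (\<Sum>j\<in>{1..N}. \<Sum>l\<in>{1..L}.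
            ereal (m l j * gcoef \<gamma> \<sigma>2 h l j * (1/(1 - load L \<gamma> m j))))"
    unfolding total_cost_def
    by (intro sum.cong refl) (use assms in \<open>auto simp: cfun_def\<close>)
  thus ?thesis by simp
qed

lemma R_eq:
  assumes "\<forall>l\<in>{1..L}. \<forall>j\<in>{1..N}. h l j = hb j"
  shows "(\<Sum>j\<in>{1..N}. \<Sum>l\<in>{1..L}. m l j * gcoef \<gamma> \<sigma>2 h l j * (1/(1 - load L \<gamma> m j)))
       = (\<Sum>j\<in>{1..N}. (\<sigma>2 / hb j) * (load L \<gamma> m j / (1 - load L \<gamma> m j)))"
proof (intro sum.cong refl)
  fix j assume j: "j \<in> {1..N}"
  have "(\<Sum>l\<in>{1..L}. m l j * gcoef \<gamma> \<sigma>2 h l j * (1/(1 - load L \<gamma> m j)))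
     = (\<Sum>l\<in>{1..L}. ((\<sigma>2 / hb j) * (1/(1 - load L \<gamma> m j))) * (\<gamma> l * m l j))"
    by (intro sum.cong refl) (use assms j in \<open>auto simp: gcoef_def\<close>)
  also have "\<dots> = (\<sigma>2 / hb j) * (load L \<gamma> m j / (1 - load L \<gamma> m j))"
    by (subst sum_distrib_left[symmetric]) (simp add: load_def)
  finally show "(\<Sum>l\<in>{1..L}. m l j * gcoef \<gamma> \<sigma>2 h l j * (1/(1 - load L \<gamma> m j))) =
     (\<sigma>2 / hb j) * (load L \<gamma> m j / (1 - load L \<gamma> m j))" .
qed

lemma exists_pos:
  assumes "congestion_profile L N M m" "\<forall>l\<in>{1..L}. \<gamma> l > 0" "j \<in> {1..N}"
    and "load L \<gamma> m j > 0"
  shows "\<exists>l\<in>{1..L}. m l j > 0"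
proof (rule ccontr)
  assume "\<not> ?thesis"
  hence "\<forall>l\<in>{1..L}. m l j = 0" using assms(1,3) unfolding congestion_profile_def
    by (meson not_less order.antisym)
  hence "load L \<gamma> m j = 0" unfolding load_def by simp
  thus False using assms by simp
qed

lemma tc_inf:
  assumes "congestion_profile L N M m" "\<forall>l\<in>{1..L}. \<gamma> l > 0"
    and "\<forall>l\<in>{1..L}. \<forall>j\<in>{1..N}. h l j > 0" "\<sigma>2 > 0"
    and "j \<in> {1..N}" "load L \<gamma> m j \<ge> 1"
  shows "total_cost L N \<gamma> \<sigma>2 h m = \<infinity>"
proof -
  obtain l where l: "l \<in> {1..L}" "m l j > 0" using exists_pos[OF assms(1,2,5)] assms(6) by auto
  have g: "gcoef \<gamma> \<sigma>2 h l j > 0" using l assms unfolding gcoef_def by auto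
  have "ereal (m l j * gcoef \<gamma> \<sigma>2 h l j) * cfun (load L \<gamma> m j) = \<infinity>"
    using g l assms(6) by (simp add: cfun_def)
  hence "(\<Sum>l\<in>{1..L}. ereal (m l j * gcoef \<gamma> \<sigma>2 h l j) * cfun (load L \<gamma> m j)) = \<infinity>"
    using l by (auto simp: sum_Pinfty)
  thus ?thesis unfolding total_cost_def using assms(5) by (auto simp: sum_Pinfty)
qed

lemma dens_real:
  assumes "\<forall>l\<in>{1..L}. \<forall>j\<in>{1..N}. h l j = hb j" "l \<in> {1..L}" "j \<in> {1..N}"
    and "load L \<gamma> m j < 1" "hb j \<noteq> 0"
  shows "toll_density L \<gamma> \<sigma>2 h m l j = ereal (\<gamma> l * ((\<sigma>2 / hb j) / (1 - load L \<gamma> m j)^2))"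
proof -
  define z where "z = load L \<gamma> m j"
  have z1: "1 - z > 0" using assms(4) by (simp add: z_def)
  have s: "(\<Sum>i\<in>{1..L}. m i j * gcoef \<gamma> \<sigma>2 h i j * (1/(1-z)^2)) = (\<sigma>2 / hb j) * z / (1-z)^2"
  proof -
    have "(\<Sum>i\<in>{1..L}. m i j * gcoef \<gamma> \<sigma>2 h i j * (1/(1-z)^2))
        = (\<Sum>i\<in>{1..L}. ((\<sigma>2 / hb j) / (1-z)^2) * (\<gamma> i * m i j))"
      by (intro sum.cong refl) (use assms in \<open>auto simp: gcoef_def\<close>)
    also have "\<dots> = (\<sigma>2 / hb j) * z / (1-z)^2"
      by (subst sum_distrib_left[symmetric]) (simp add: load_def z_def)
    finally show ?thesis .
  qed
  have "toll_density L \<gamma> \<sigma>2 h m l j = ereal (gcoef \<gamma> \<sigma>2 h l j * (1/(1-z)) + \<gamma> l *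
        (\<Sum>i\<in>{1..L}. m i j * gcoef \<gamma> \<sigma>2 h i j * (1/(1-z)^2)))"
    unfolding toll_density_def z_def[symmetric] using assms(4)
    by (simp add: cfun_def dcfun_def z_def)
  also have "\<dots> = ereal (\<gamma> l * ((\<sigma>2 / hb j) / (1 - z)^2))"
  proof -
    have hh: "h l j = hb j" using assms by auto
    define a where "a = \<sigma>2 / hb j"
    have e1: "a / (1-z) = a*(1-z)/(1-z)^2" using z1 by (simp add: power2_eq_square)
    have "a / (1-z) + a * z / (1-z)^2 = (a*(1-z) + a*z)/(1-z)^2"
      unfolding e1 by (simp add: add_divide_distrib)
    also have "\<dots> = a * ((1-z) + z) / (1-z)^2" by (simp add: algebra_simps)
    finally have "a / (1-z) + a * z / (1-z)^2 = a * ((1-z) + z) / (1-z)^2" .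
    hence E2: "a / (1-z) + a * z / (1-z)^2 = a / (1-z)^2" by simp
    have g: "gcoef \<gamma> \<sigma>2 h l j = \<gamma> l * a" by (simp add: gcoef_def hh a_def)
    have "gcoef \<gamma> \<sigma>2 h l j * (1/(1-z)) + \<gamma> l * ((\<sigma>2 / hb j) * z / (1-z)^2)
        = \<gamma> l * (a / (1-z) + a * z / (1-z)^2)"
      unfolding g a_def by (simp add: algebra_simps)
    also have "\<dots> = \<gamma> l * (a / (1-z)^2)" by (simp only: E2)
    finally show ?thesis unfolding s a_def by simp
  qed
  finally show ?thesis by (simp add: z_def)
qed

lemma dens_inf:
  assumes "congestion_profile L N M m" "\<forall>l\<in>{1..L}. \<gamma> l > 0"
    and "\<forall>l\<in>{1..L}. \<forall>j\<in>{1..N}. h l j > 0" "\<sigma>2 > 0"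
    and "l \<in> {1..L}" "j \<in> {1..N}" "load L \<gamma> m j \<ge> 1"
  shows "toll_density L \<gamma> \<sigma>2 h m l j = \<infinity>"
proof -
  have g: "gcoef \<gamma> \<sigma>2 h l j > 0" using assms unfolding gcoef_def by auto
  have A: "ereal (gcoef \<gamma> \<sigma>2 h l j) * cfun (load L \<gamma> m j) = \<infinity>"
    using g assms(7) by (simp add: cfun_def)
  have nn: "\<And>i. i \<in> {1..L} \<Longrightarrow> m i j * gcoef \<gamma> \<sigma>2 h i j \<ge> 0"
  proof -
    fix i assume i: "i \<in> {1..L}"
    have "m i j \<ge> 0" using assms(1,6) i by (auto simp: congestion_profile_def)
    moreover have "gcoef \<gamma> \<sigma>2 h i j > 0" using assms(2,3,4,6) i by (auto simp: gcoef_def)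
    ultimately show "m i j * gcoef \<gamma> \<sigma>2 h i j \<ge> 0" by simp
  qed
  moreover have "ereal (\<gamma> l) * (\<Sum>i\<in>{1..L}. ereal (m i j * gcoef \<gamma> \<sigma>2 h i j) * dcfun (load L \<gamma> m j)) \<ge> 0"
    using assms(2,5) nn by (intro ereal_0_le_mult sum_nonneg) (auto intro!: ereal_0_le_mult less_imp_le simp: dcfun_nonneg)
  show ?thesis unfolding toll_density_def A by simp
qed

theorem proposition13:
  fixes L N :: nat and M \<gamma> :: "nat \<Rightarrow> real" and \<sigma>2 :: real
    and h :: "nat \<Rightarrow> nat \<Rightarrow> real" and hb :: "nat \<Rightarrow> real"
    and m :: "nat \<Rightarrow> nat \<Rightarrow> real"
  assumes M_pos: "\<forall>l\<in>{1..L}. M l > 0"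
    and \<gamma>_pos: "\<forall>l\<in>{1..L}. \<gamma> l > 0"
    and h_pos: "\<forall>l\<in>{1..L}. \<forall>j\<in>{1..N}. h l j > 0"
    and \<sigma>_pos: "\<sigma>2 > 0"
    and feasible: "(\<Sum>l\<in>{1..L}. \<gamma> l * M l) < real N"
    and h_common: "\<forall>l\<in>{1..L}. \<forall>j\<in>{1..N}. h l j = hb j"
    and NE: "toll_nash_eq L N M \<gamma> \<sigma>2 h m"
  shows "\<forall>m'. congestion_profile L N M m' \<longrightarrow>
           total_cost L N \<gamma> \<sigma>2 h m \<le> total_cost L N \<gamma> \<sigma>2 h m'"
proof (cases "L = 0")
  case True
  thus ?thesis by (simp add: total_cost_def)
next
  case False
  hence L1: "1 \<in> {1..L}" by simp
  have cp: "congestion_profile L N M m" using NE by (simp add: toll_nash_eq_def)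
  have NE2: "\<And>l j k. l \<in> {1..L} \<Longrightarrow> j \<in> {1..N} \<Longrightarrow> m l j > 0 \<Longrightarrow> k \<in> {1..N} \<Longrightarrow>
      toll_density L \<gamma> \<sigma>2 h m l j \<le> toll_density L \<gamma> \<sigma>2 h m l k"
    using NE by (simp add: toll_nash_eq_def)
  have hb_pos: "\<And>j. j \<in> {1..N} \<Longrightarrow> hb j > 0" using h_pos h_common L1 by force
  define ld where "ld = load L \<gamma> m"
  have lt1: "\<forall>j\<in>{1..N}. ld j < 1"
  proof (rule ccontr)
    assume "\<not> ?thesis"
    then obtain j0 where j0: "j0 \<in> {1..N}" "ld j0 \<ge> 1" by (auto simp: not_less)
    obtain l where l: "l \<in> {1..L}" "m l j0 > 0"
      using exists_pos[OF cp _ j0(1)] \<gamma>_pos j0(2) ld_def by fastforce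
    have inf0: "toll_density L \<gamma> \<sigma>2 h m l j0 = \<infinity>"
      using dens_inf[OF cp \<gamma>_pos h_pos \<sigma>_pos l(1) j0(1)] j0(2) ld_def by simp
    have ge: "\<forall>k\<in>{1..N}. ld k \<ge> 1"
    proof
      fix k assume k: "k \<in> {1..N}"
      show "ld k \<ge> 1"
      proof (rule ccontr)
        assume "\<not> ld k \<ge> 1"
        hence "ld k < 1" by simp
        hence "toll_density L \<gamma> \<sigma>2 h m l k = ereal (\<gamma> l * ((\<sigma>2 / hb k) / (1 - ld k)^2))"
          using dens_real[OF h_common l(1) k] hb_pos[OF k] ld_def by simp
        moreover have "toll_density L \<gamma> \<sigma>2 h m l j0 \<le> toll_density L \<gamma> \<sigma>2 h m l k"
          using NE2[OF l(1) j0(1) l(2) k] .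
        ultimately show False using inf0 by simp
      qed
    qed
    have "real N = (\<Sum>j\<in>{1..N}. (1::real))" by simp
    also have "\<dots> \<le> (\<Sum>j\<in>{1..N}. ld j)" using ge by (intro sum_mono) auto
    also have "\<dots> = (\<Sum>l\<in>{1..L}. \<gamma> l * M l)" unfolding ld_def by (rule ld_sum[OF cp])
    finally show False using feasible by simp
  qed
  define a where "a j = \<sigma>2 / hb j" for j
  define D where "D j = a j / (1 - ld j)^2" for j
  have apos: "\<And>j. j \<in> {1..N} \<Longrightarrow> a j \<ge> 0" using hb_pos \<sigma>_pos a_def by (simp add: less_imp_le)
  have NEr: "\<And>l j k. l \<in> {1..L} \<Longrightarrow> j \<in> {1..N} \<Longrightarrow> m l j > 0 \<Longrightarrow> k \<in> {1..N} \<Longrightarrow> D j \<le> D k"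
  proof -
    fix l j k assume l: "l \<in> {1..L}" and j: "j \<in> {1..N}" and p: "m l j > 0" and k: "k \<in> {1..N}"
    have "toll_density L \<gamma> \<sigma>2 h m l j \<le> toll_density L \<gamma> \<sigma>2 h m l k" using NE2[OF l j p k] .
    moreover have "toll_density L \<gamma> \<sigma>2 h m l j = ereal (\<gamma> l * D j)"
      using dens_real[OF h_common l j] hb_pos[OF j] lt1 j ld_def D_def a_def by simp
    moreover have "toll_density L \<gamma> \<sigma>2 h m l k = ereal (\<gamma> l * D k)"
      using dens_real[OF h_common l k] hb_pos[OF k] lt1 k ld_def D_def a_def by simp
    ultimately have "\<gamma> l * D j \<le> \<gamma> l * D k" by simp
    thus "D j \<le> D k" using \<gamma>_pos l by simp
  qed
  show ?thesis
  proof (intro allI impI)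
    fix m' assume cp': "congestion_profile L N M m'"
    define ld' where "ld' = load L \<gamma> m'"
    show "total_cost L N \<gamma> \<sigma>2 h m \<le> total_cost L N \<gamma> \<sigma>2 h m'"
    proof (cases "\<exists>j\<in>{1..N}. ld' j \<ge> 1")
      case True
      then obtain j where "j \<in> {1..N}" "ld' j \<ge> 1" by auto
      hence "total_cost L N \<gamma> \<sigma>2 h m' = \<infinity>"
        using tc_inf[OF cp' \<gamma>_pos h_pos \<sigma>_pos] ld'_def by simp
      thus ?thesis by simp
    next
      case False
      hence lt1': "\<forall>j\<in>{1..N}. ld' j < 1" by (auto simp: not_le)
      have T1: "total_cost L N \<gamma> \<sigma>2 h m = ereal (\<Sum>j\<in>{1..N}. a j * (ld j / (1 - ld j)))"
        using tc_real[of N L \<gamma> m \<sigma>2 h] lt1 R_eq[OF h_common, of m \<gamma> \<sigma>2] ld_def a_def by simp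
      have T2: "total_cost L N \<gamma> \<sigma>2 h m' = ereal (\<Sum>j\<in>{1..N}. a j * (ld' j / (1 - ld' j)))"
        using tc_real[of N L \<gamma> m' \<sigma>2 h] lt1' R_eq[OF h_common, of m' \<gamma> \<sigma>2] ld'_def a_def by simp
      have pt: "\<And>j. j \<in> {1..N} \<Longrightarrow>
          a j * (ld j / (1 - ld j)) + D j * (ld' j - ld j) \<le> a j * (ld' j / (1 - ld' j))"
      proof -
        fix j assume j: "j \<in> {1..N}"
        have "a j * (ld j/(1-ld j) + (ld' j - ld j)/(1-ld j)^2) \<le> a j * (ld' j/(1-ld' j))"
          using cvx[of "ld j" "ld' j"] lt1 lt1' j apos[OF j] by (intro mult_left_mono) auto
        moreover have "a j * (ld j/(1-ld j) + (ld' j - ld j)/(1-ld j)^2)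
            = a j * (ld j / (1 - ld j)) + D j * (ld' j - ld j)"
          by (simp add: D_def distrib_left)
        ultimately show "a j * (ld j / (1 - ld j)) + D j * (ld' j - ld j) \<le> a j * (ld' j / (1 - ld' j))"
          by simp
      qed
      have swap: "\<And>mm. (\<Sum>j\<in>{1..N}. D j * load L \<gamma> mm j) = (\<Sum>l\<in>{1..L}. \<gamma> l * (\<Sum>j\<in>{1..N}. D j * mm l j))"
      proof -
        fix mm :: "nat \<Rightarrow> nat \<Rightarrow> real"
        have "(\<Sum>j\<in>{1..N}. D j * load L \<gamma> mm j) = (\<Sum>j\<in>{1..N}. \<Sum>l\<in>{1..L}. \<gamma> l * (D j * mm l j))"
          unfolding load_def by (simp add: sum_distrib_left mult_ac)
        also have "\<dots> = (\<Sum>l\<in>{1..L}. \<Sum>j\<in>{1..N}. \<gamma> l * (D j * mm l j))" by (rule sum.swap)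
        also have "\<dots> = (\<Sum>l\<in>{1..L}. \<gamma> l * (\<Sum>j\<in>{1..N}. D j * mm l j))"
          by (simp add: sum_distrib_left)
        finally show "(\<Sum>j\<in>{1..N}. D j * load L \<gamma> mm j) = (\<Sum>l\<in>{1..L}. \<gamma> l * (\<Sum>j\<in>{1..N}. D j * mm l j))" .
      qed
      have perl: "\<And>l. l \<in> {1..L} \<Longrightarrow> (\<Sum>j\<in>{1..N}. D j * m l j) \<le> (\<Sum>j\<in>{1..N}. D j * m' l j)"
      proof -
        fix l assume l: "l \<in> {1..L}"
        have sm: "(\<Sum>j\<in>{1..N}. m l j) = M l" and sm': "(\<Sum>j\<in>{1..N}. m' l j) = M l"
          using cp cp' l by (auto simp: congestion_profile_def)
        have nn': "\<And>j. j \<in> {1..N} \<Longrightarrow> m' l j \<ge> 0" using cp' l by (auto simp: congestion_profile_def)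
        have nn: "\<And>j. j \<in> {1..N} \<Longrightarrow> m l j \<ge> 0" using cp l by (auto simp: congestion_profile_def)
        have "\<exists>j0\<in>{1..N}. m l j0 > 0"
        proof (rule ccontr)
          assume "\<not> ?thesis"
          hence "\<forall>j\<in>{1..N}. m l j \<le> 0" by (auto simp: not_less)
          hence "(\<Sum>j\<in>{1..N}. m l j) \<le> 0" by (intro sum_nonpos) auto
          moreover have "M l > 0" using M_pos l by blast
          ultimately show False using sm by linarith
        qed
        then obtain j0 where j0: "j0 \<in> {1..N}" "m l j0 > 0" by blast
        have "(\<Sum>j\<in>{1..N}. D j * m l j) = (\<Sum>j\<in>{1..N}. D j0 * m l j)"
        proof (intro sum.cong refl)
          fix j assume j: "j \<in> {1..N}"
          show "D j * m l j = D j0 * m l j"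
          proof (cases "m l j > 0")
            case True
            have "D j \<le> D j0" using NEr[OF l j True j0(1)] .
            moreover have "D j0 \<le> D j" using NEr[OF l j0(1) j0(2) j] .
            ultimately have "D j = D j0" by linarith
            thus ?thesis by simp
          next
            case False
            hence "m l j = 0" using nn[OF j] by simp
            thus ?thesis by simp
          qed
        qed
        also have "\<dots> = D j0 * M l" by (simp only: sum_distrib_left[symmetric] sm)
        also have "\<dots> = (\<Sum>j\<in>{1..N}. D j0 * m' l j)" by (simp only: sum_distrib_left[symmetric] sm')
        also have "\<dots> \<le> (\<Sum>j\<in>{1..N}. D j * m' l j)"
          using NEr[OF l j0(1) j0(2)] nn' by (intro sum_mono mult_right_mono) auto
        finally show "(\<Sum>j\<in>{1..N}. D j * m l j) \<le> (\<Sum>j\<in>{1..N}. D j * m' l j)" .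
      qed
      have key: "(\<Sum>j\<in>{1..N}. D j * (ld' j - ld j)) \<ge> 0"
      proof -
        have "(\<Sum>j\<in>{1..N}. D j * (ld' j - ld j)) = (\<Sum>j\<in>{1..N}. D j * ld' j) - (\<Sum>j\<in>{1..N}. D j * ld j)"
          by (simp add: right_diff_distrib sum_subtractf)
        also have "\<dots> = (\<Sum>l\<in>{1..L}. \<gamma> l * (\<Sum>j\<in>{1..N}. D j * m' l j)) - (\<Sum>l\<in>{1..L}. \<gamma> l * (\<Sum>j\<in>{1..N}. D j * m l j))"
          unfolding ld_def ld'_def swap ..
        moreover have "(\<Sum>l\<in>{1..L}. \<gamma> l * (\<Sum>j\<in>{1..N}. D j * m l j)) \<le> (\<Sum>l\<in>{1..L}. \<gamma> l * (\<Sum>j\<in>{1..N}. D j * m' l j))"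
          proof (rule sum_mono)
          fix l assume l: "l \<in> {1..L}"
          have "\<gamma> l \<ge> 0" using \<gamma>_pos l by (simp add: less_imp_le)
          thus "\<gamma> l * (\<Sum>j\<in>{1..N}. D j * m l j) \<le> \<gamma> l * (\<Sum>j\<in>{1..N}. D j * m' l j)"
            by (rule mult_left_mono[OF perl[OF l]])
        qed
        ultimately show ?thesis by linarith
      qed
      have "(\<Sum>j\<in>{1..N}. a j * (ld j / (1 - ld j)))
          \<le> (\<Sum>j\<in>{1..N}. a j * (ld j / (1 - ld j)) + D j * (ld' j - ld j))"
        using key by (simp add: sum.distrib)
      also have "\<dots> \<le> (\<Sum>j\<in>{1..N}. a j * (ld' j / (1 - ld' j)))"
        using pt by (intro sum_mono) auto
      finally show ?thesis unfolding T1 T2 by simp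
    qed
  qed
qed

end
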